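(* Let $(X,g_X)$ be the Eguchi--Hanson space. There are no critical rates for the operator $\mathcal{D}^*_X$ in the interval $[-2,0]$.
   Context: The Eguchi--Hanson space $X$ is the blow-up of $\mathbb{C}^2/\{\pm1\}$ at $0$ with its hyperkähler ALE metric $g_X$, asymptotic to the flat cone $\mathbb{R}^4/\{\pm1\}$ (the cone over $\mathbb{RP}^3$). The operator $\mathcal{D}^*_X:\Omega^1(X)\to\Omega^0(X)\oplus\Omega^2_+(X)$ is $\mathcal{D}^*_X\alpha=(\mathrm{d}^*_X\alpha,\pi_+\mathrm{d}_X\alpha)$, where $\pi_+$ is the projection to self-dual $2$-forms; it is the formal adjoint of $\mathcal{D}_X(f,\beta)=\mathrm{d}_Xf+\mathrm{d}^*_X\beta$. A rate $\lambda\in\mathbb{R}$ is critical for $\mathcal{D}^*_X$ if there exists a nonzero $1$-form $\alpha$ on the flat cone $(\mathbb{R}^4\setminus\{0\})/\{\pm1\}$ which is homogeneous of order $\lambda$ (its components with respect to the parallel coframe $dy_1,\dots,dy_4$ on $\mathbb{R}^4\setminus\{0\}$ are homogeneous functions of degree $\lambda$) and satisfies $\mathrm{d}^*\alpha=0$ and $\pi_+\mathrm{d}\alpha=0$ for the flat metric. *)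

theory Defs
  imports "HOL-Analysis.Analysis"
begin

definition pd :: "'n::finite \<Rightarrow> (real^'n \<Rightarrow> real) \<Rightarrow> real^'n \<Rightarrow> real" where
  "pd i f y = frechet_derivative f (at y) (axis i 1)"

inductive higher_partial :: "(real^'n::finite \<Rightarrow> real) \<Rightarrow> (real^'n \<Rightarrow> real) \<Rightarrow> bool"
  for f where
  base: "higher_partial f f"
| step: "higher_partial f g \<Longrightarrow> higher_partial f (pd i g)"

definition smooth_on :: "(real^'n::finite) set \<Rightarrow> (real^'n \<Rightarrow> real) \<Rightarrow> bool" where
  "smooth_on S f \<longleftrightarrow> (\<forall>g. higher_partial f g \<longrightarrow> (\<forall>y\<in>S. g differentiable (at y)))"

text \<open>A 1-form on R^4 minus 0 is encoded by its coefficient vector field: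
  alpha = sum_i (alpha y $ i) dy_i.  Curvature components F_ij = d_i a_j - d_j a_i.\<close>
definition dcoef :: "(real^4 \<Rightarrow> real^4) \<Rightarrow> 4 \<Rightarrow> 4 \<Rightarrow> real^4 \<Rightarrow> real" where
  "dcoef \<alpha> i j y = pd i (\<lambda>z. \<alpha> z $ j) y - pd j (\<lambda>z. \<alpha> z $ i) y"

text \<open>Critical rate of D^*_X: a nonzero smooth 1-form on (R^4 - 0)/{+-1}
  (i.e. invariant under y -> -y, whose pullback sends dy_i to -dy_i),
  homogeneous of order lambda, with d^* alpha = 0 and pi_+ d alpha = 0
  (orientation dy1 dy2 dy3 dy4; self-dual forms spanned by
   dy12+dy34, dy13+dy42, dy14+dy23).\<close>
definition critical_rate :: "real \<Rightarrow> bool" where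
  "critical_rate r \<longleftrightarrow> (\<exists>\<alpha> :: real^4 \<Rightarrow> real^4.
     (\<forall>i. smooth_on (UNIV - {0}) (\<lambda>y. \<alpha> y $ i)) \<and>
     (\<forall>y. y \<noteq> 0 \<longrightarrow> \<alpha> (- y) = - \<alpha> y) \<and>
     (\<forall>t y. t > 0 \<longrightarrow> y \<noteq> 0 \<longrightarrow> \<alpha> (t *\<^sub>R y) = (t powr r) *\<^sub>R \<alpha> y) \<and>
     (\<forall>y. y \<noteq> 0 \<longrightarrow> (\<Sum>i\<in>UNIV. pd i (\<lambda>z. \<alpha> z $ i) y) = 0) \<and>
     (\<forall>y. y \<noteq> 0 \<longrightarrow>
        dcoef \<alpha> 1 2 y + dcoef \<alpha> 3 4 y = 0 \<and>
        dcoef \<alpha> 1 3 y + dcoef \<alpha> 4 2 y = 0 \<and>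
        dcoef \<alpha> 1 4 y + dcoef \<alpha> 2 3 y = 0) \<and>
     (\<exists>y. y \<noteq> 0 \<and> \<alpha> y \<noteq> 0))"

end

theory Submission
  imports Defs
begin


lemma sum4: "(\<Sum>i\<in>(UNIV::4 set). g i) = g 1 + g 2 + g 3 + g 4"
  by (rule sum_4)

lemma pd_eqI:
  assumes "(f has_derivative (\<lambda>v. \<Sum>j\<in>UNIV. v$j * D j)) (at y)"
  shows "pd i f y = D i"
proof -
  have "frechet_derivative f (at y) = (\<lambda>v. \<Sum>j\<in>UNIV. v$j * D j)"
    using frechet_derivative_at[OF assms] by simp
  moreover have "\<And>j. (axis i (1::real))$j * D j = (if j = i then D i else 0)" by (simp add: axis_def)
  ultimately show ?thesis unfolding pd_def by simp
qed

lemma pd_hasderiv: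
  assumes "f differentiable at y"
  shows "(f has_derivative (\<lambda>v. \<Sum>j\<in>UNIV. v$j * pd j f y)) (at y)"
proof -
  have L: "linear (frechet_derivative f (at y))" using linear_frechet_derivative[OF assms] .
  have "frechet_derivative f (at y) v = (\<Sum>j\<in>UNIV. v$j * pd j f y)" for v
  proof -
    have "frechet_derivative f (at y) v = frechet_derivative f (at y) (\<Sum>j\<in>UNIV. v$j *\<^sub>R axis j 1)"
      using basis_expansion[of v] by (simp add: scalar_mult_eq_scaleR)
    also have "\<dots> = (\<Sum>j\<in>UNIV. v$j * frechet_derivative f (at y) (axis j 1))"
      using L by (simp add: linear_sum linear_scale)
    finally show ?thesis by (simp add: pd_def)
  qed
  then have "frechet_derivative f (at y) = (\<lambda>v. \<Sum>j\<in>UNIV. v$j * pd j f y)" by auto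
  then show ?thesis using frechet_derivative_works assms by metis
qed

lemma pd_cong:
  assumes "open S" "y \<in> S" "\<And>z. z \<in> S \<Longrightarrow> f z = g z"
  shows "pd i f y = pd i g y"
proof -
  have "\<And>D. (f has_derivative D) (at y) \<longleftrightarrow> (g has_derivative D) (at y)"
    using has_derivative_transform_within_open assms by metis
  then show ?thesis unfolding pd_def frechet_derivative_def by simp
qed

lemma line_deriv:
  fixes g :: "real^4 \<Rightarrow> real"
  assumes "(g has_derivative (\<lambda>v. \<Sum>j\<in>UNIV. v$j * D j)) (at (p + t *\<^sub>R w))"
  shows "((\<lambda>s. g (p + s *\<^sub>R w)) has_real_derivative (\<Sum>j\<in>UNIV. w$j * D j)) (at t)"
proof -
  have "((\<lambda>s. p + s *\<^sub>R w) has_derivative (\<lambda>s. s *\<^sub>R w)) (at t)"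
    by (auto intro!: derivative_eq_intros)
  from has_derivative_compose[OF this assms]
  have "((\<lambda>s. g (p + s *\<^sub>R w)) has_derivative (\<lambda>s. \<Sum>j\<in>UNIV. (s *\<^sub>R w)$j * D j)) (at t)"
    by (simp add: o_def)
  moreover have "(\<lambda>s. \<Sum>j\<in>UNIV. (s *\<^sub>R w)$j * D j) = (\<lambda>s. s * (\<Sum>j\<in>UNIV. w$j * D j))"
    by (auto simp: sum_distrib_left algebra_simps)
  ultimately have "((\<lambda>s. g (p + s *\<^sub>R w)) has_derivative (\<lambda>s. s * (\<Sum>j\<in>UNIV. w$j * D j))) (at t)"
    by simp
  moreover have "(\<lambda>s. s * (\<Sum>j\<in>UNIV. w$j * D j)) = (*) (\<Sum>j\<in>UNIV. w$j * D j)" by (rule ext) simp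
  ultimately show ?thesis unfolding has_field_derivative_def by metis
qed



lemma sum_axis_mult: "(\<Sum>k\<in>UNIV. (axis i (1::real))$k * D k) = D i"
proof -
  have "\<And>k. (axis i (1::real))$k * D k = (if k = i then D i else 0)" by (simp add: axis_def)
  then show ?thesis by simp
qed

lemma lin_diff_axis:
  "(\<Sum>k\<in>UNIV. (a *\<^sub>R axis i 1 + h *\<^sub>R axis j (1::real))$k * D k) - (\<Sum>k\<in>UNIV. (a *\<^sub>R axis i (1::real))$k * D k) = h * D j"
proof -
  have "(\<Sum>k\<in>UNIV. (a *\<^sub>R axis i 1 + h *\<^sub>R axis j (1::real))$k * D k) =
     (\<Sum>k\<in>UNIV. (a *\<^sub>R axis i (1::real))$k * D k) + (\<Sum>k\<in>UNIV. h * ((axis j (1::real))$k * D k))"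
    by (simp add: sum.distrib[symmetric] algebra_simps)
  also have "(\<Sum>k\<in>UNIV. h * ((axis j (1::real))$k * D k)) = h * D j"
    by (simp add: sum_distrib_left[symmetric] sum_axis_mult)
  finally show ?thesis by simp
qed

lemma quad:
  fixes f :: "real^4 \<Rightarrow> real"
  assumes S: "open S" "y \<in> S" and df: "\<forall>z\<in>S. f differentiable at z"
    and dg: "pd i f differentiable at y" and e: "e > 0"
  shows "\<exists>d>0. \<forall>h. 0 < h \<and> h < d \<longrightarrow>
     \<bar>f (y + h *\<^sub>R axis i 1 + h *\<^sub>R axis j 1) - f (y + h *\<^sub>R axis i 1) - f (y + h *\<^sub>R axis j 1) + f y
       - h^2 * pd j (pd i f) y\<bar> \<le> e * h^2"
proof -
  define g where "g = pd i f"
  define L where "L = (\<lambda>v::real^4. \<Sum>k\<in>UNIV. v$k * pd k g y)"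
  have gd: "(g has_derivative L) (at y)" unfolding L_def g_def using pd_hasderiv[OF dg] .
  obtain d1 where d1: "d1 > 0" "\<forall>x. norm (x - y) < d1 \<longrightarrow> norm (g x - g y - L (x - y)) \<le> (e/3) * norm (x - y)"
    using gd[unfolded has_derivative_at_alt] e by (meson divide_pos_pos zero_less_numeral)
  obtain d0 where d0: "d0 > 0" "ball y d0 \<subseteq> S" using S openE by blast
  define d where "d = min d1 d0 / 2"
  have "d > 0" using d0 d1 by (simp add: d_def)
  moreover have "\<bar>f (y + h *\<^sub>R axis i 1 + h *\<^sub>R axis j 1) - f (y + h *\<^sub>R axis i 1) - f (y + h *\<^sub>R axis j 1) + f y
       - h^2 * pd j g y\<bar> \<le> e * h^2" if h: "0 < h" "h < d" for h
  proof -
    define \<phi> where "\<phi> = (\<lambda>s. f (y + h *\<^sub>R axis j 1 + s *\<^sub>R axis i 1) - f (y + s *\<^sub>R axis i 1))"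
    have nb: "norm (s *\<^sub>R axis i (1::real) + t *\<^sub>R axis j 1) \<le> \<bar>s\<bar> + \<bar>t\<bar>" for s t
      using norm_triangle_ineq[of "s *\<^sub>R axis i (1::real)" "t *\<^sub>R axis j 1"] by simp
    have inS: "y + (s *\<^sub>R axis i (1::real) + t *\<^sub>R axis j 1) \<in> S" if "\<bar>s\<bar> + \<bar>t\<bar> < d0" for s t
    proof -
      have "dist y (y + (s *\<^sub>R axis i (1::real) + t *\<^sub>R axis j 1)) = norm (s *\<^sub>R axis i (1::real) + t *\<^sub>R axis j 1)"
        by (metis add_diff_cancel_left' dist_commute dist_norm)
      then have "dist y (y + (s *\<^sub>R axis i (1::real) + t *\<^sub>R axis j 1)) < d0"
        using nb[of s t] that by linarith
      then show ?thesis using d0 by auto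
    qed
    have der: "DERIV \<phi> s :> (g (y + h *\<^sub>R axis j 1 + s *\<^sub>R axis i 1) - g (y + s *\<^sub>R axis i 1))"
      if s: "0 \<le> s" "s \<le> h" for s
    proof -
      have hd: "2*h < d0" "2*h < d1" using h d_def d0 d1 by auto
      have "y + h *\<^sub>R axis j 1 + s *\<^sub>R axis i 1 \<in> S"
        using inS[of s h] s hd by (simp add: algebra_simps)
      then have D1: "((\<lambda>s. f (y + h *\<^sub>R axis j 1 + s *\<^sub>R axis i 1)) has_real_derivative g (y + h *\<^sub>R axis j 1 + s *\<^sub>R axis i 1)) (at s)"
        using line_deriv[OF pd_hasderiv, of f "y + h *\<^sub>R axis j 1" s "axis i 1"] df
        by (simp add: sum_axis_mult g_def)
      have "y + s *\<^sub>R axis i 1 \<in> S"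
        using inS[of s 0] s hd by (simp add: algebra_simps)
      then have D2: "((\<lambda>s. f (y + s *\<^sub>R axis i 1)) has_real_derivative g (y + s *\<^sub>R axis i 1)) (at s)"
        using line_deriv[OF pd_hasderiv, of f "y" s "axis i 1"] df
        by (simp add: sum_axis_mult g_def)
      show ?thesis unfolding \<phi>_def using DERIV_diff[OF D1 D2] .
    qed
    obtain \<xi> where xi: "0 < \<xi>" "\<xi> < h"
      "\<phi> h - \<phi> 0 = (h - 0) * (g (y + h *\<^sub>R axis j 1 + \<xi> *\<^sub>R axis i 1) - g (y + \<xi> *\<^sub>R axis i 1))"
      using MVT2[OF h(1), of \<phi>, OF der] by auto
    define v1 where "v1 = \<xi> *\<^sub>R axis i (1::real) + h *\<^sub>R axis j 1"
    define v2 where "v2 = \<xi> *\<^sub>R axis i (1::real)"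
    have n1: "norm v1 \<le> 2*h" using nb[of \<xi> h] xi h by (simp add: v1_def)
    have n2: "norm v2 \<le> h" using xi by (simp add: v2_def)
    have hd: "2*h < d1" using h d_def d0 d1 by auto
    have E1: "\<bar>g (y + v1) - g y - L v1\<bar> \<le> (e/3) * norm v1"
      using d1(2)[rule_format, of "y + v1"] n1 hd by simp
    have E2: "\<bar>g (y + v2) - g y - L v2\<bar> \<le> (e/3) * norm v2"
      using d1(2)[rule_format, of "y + v2"] n2 hd h by simp
    have LL: "L v1 - L v2 = h * pd j g y"
      unfolding L_def v1_def v2_def by (rule lin_diff_axis)
    have eq: "f (y + h *\<^sub>R axis i 1 + h *\<^sub>R axis j 1) - f (y + h *\<^sub>R axis i 1) - f (y + h *\<^sub>R axis j 1) + f y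
       = h * (g (y + v1) - g (y + v2))"
      using xi(3) unfolding \<phi>_def v1_def v2_def by (simp add: algebra_simps)
    have "\<bar>g (y + v1) - g (y + v2) - h * pd j g y\<bar> \<le> (e/3) * norm v1 + (e/3) * norm v2"
      using E1 E2 LL by linarith
    also have "\<dots> \<le> (e/3) * (2*h) + (e/3) * h"
      using n1 n2 e by (intro add_mono mult_left_mono) auto
    finally have "\<bar>g (y + v1) - g (y + v2) - h * pd j g y\<bar> \<le> e * h" by simp
    then have le: "h * \<bar>g (y + v1) - g (y + v2) - h * pd j g y\<bar> \<le> h * (e * h)"
      using h by (intro mult_left_mono) auto
    have "h * (g (y + v1) - g (y + v2)) - h^2 * pd j g y = h * (g (y + v1) - g (y + v2) - h * pd j g y)"
      by (simp add: algebra_simps power2_eq_square)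
    then have "\<bar>h * (g (y + v1) - g (y + v2)) - h^2 * pd j g y\<bar> = h * \<bar>g (y + v1) - g (y + v2) - h * pd j g y\<bar>"
      using h by (simp add: abs_mult)
    moreover have "h * (e * h) = e * h^2" by (simp add: power2_eq_square)
    ultimately show ?thesis unfolding eq using le by linarith
  qed
  ultimately show ?thesis unfolding g_def by blast
qed

lemma schwarz:
  fixes f :: "real^4 \<Rightarrow> real"
  assumes S: "open S" "y \<in> S" and df: "\<forall>z\<in>S. f differentiable at z"
    and di: "pd i f differentiable at y" and dj: "pd j f differentiable at y"
  shows "pd j (pd i f) y = pd i (pd j f) y"
proof (rule ccontr)
  let ?a = "pd j (pd i f) y" and ?b = "pd i (pd j f) y"
  assume ne: "?a \<noteq> ?b"
  define e where "e = \<bar>?a - ?b\<bar> / 4"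
  have e: "e > 0" using ne by (simp add: e_def)
  obtain d1 where d1: "d1 > 0" "\<forall>h. 0 < h \<and> h < d1 \<longrightarrow>
     \<bar>f (y + h *\<^sub>R axis i 1 + h *\<^sub>R axis j 1) - f (y + h *\<^sub>R axis i 1) - f (y + h *\<^sub>R axis j 1) + f y
       - h^2 * ?a\<bar> \<le> e * h^2"
    using quad[OF S df di e] by blast
  obtain d2 where d2: "d2 > 0" "\<forall>h. 0 < h \<and> h < d2 \<longrightarrow>
     \<bar>f (y + h *\<^sub>R axis j 1 + h *\<^sub>R axis i 1) - f (y + h *\<^sub>R axis j 1) - f (y + h *\<^sub>R axis i 1) + f y
       - h^2 * ?b\<bar> \<le> e * h^2"
    using quad[OF S df dj e] by blast
  define h where "h = min d1 d2 / 2"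
  have h: "0 < h" "h < d1" "h < d2" using d1 d2 by (auto simp: h_def)
  have A: "\<bar>f (y + h *\<^sub>R axis i 1 + h *\<^sub>R axis j 1) - f (y + h *\<^sub>R axis i 1) - f (y + h *\<^sub>R axis j 1) + f y
       - h^2 * ?a\<bar> \<le> e * h^2" using d1 h by blast
  have B: "\<bar>f (y + h *\<^sub>R axis i 1 + h *\<^sub>R axis j 1) - f (y + h *\<^sub>R axis i 1) - f (y + h *\<^sub>R axis j 1) + f y
       - h^2 * ?b\<bar> \<le> e * h^2" using d2 h by (simp add: algebra_simps)
  have "h^2 * \<bar>?a - ?b\<bar> \<le> 2 * e * h^2"
  proof -
    have "\<bar>h^2 * ?a - h^2 * ?b\<bar> \<le> 2 * e * h^2" using A B by linarith
    then show ?thesis by (simp add: abs_mult right_diff_distrib[symmetric])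
  qed
  moreover have "h^2 > 0" using h by simp
  ultimately have "\<bar>?a - ?b\<bar> \<le> 2 * e" by simp
  then show False using e e_def by simp
qed



lemma key1d:
  fixes k k' :: "real \<Rightarrow> real"
  assumes d: "\<delta> > 0" and le: "\<forall>s. \<bar>s\<bar> < \<delta> \<longrightarrow> k s \<le> 0" and k0: "k 0 = 0"
    and dk: "\<forall>s. \<bar>s\<bar> < \<delta> \<longrightarrow> DERIV k s :> k' s" and dk': "DERIV k' 0 :> c"
  shows "c \<le> 0"
proof (rule ccontr)
  assume "\<not> c \<le> 0"
  then have c: "c > 0" by simp
  have D0: "DERIV k 0 :> k' 0" using dk d by auto
  have "\<forall>y. \<bar>0 - y\<bar> < \<delta> \<longrightarrow> k y \<le> k 0" using le k0 by auto
  then have "k' 0 = 0"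
    using DERIV_local_max[OF D0 d] by blast
  obtain d' where d': "d' > 0" "\<forall>h>0. h < d' \<longrightarrow> k' 0 < k' (0 + h)"
    using DERIV_pos_inc_right[OF dk' c] by blast
  define h where "h = min \<delta> d' / 2"
  have h: "0 < h" "h < \<delta>" "h < d'" using d d' by (auto simp: h_def)
  obtain z where z: "0 < z" "z < h" "k h - k 0 = (h - 0) * k' z"
    using MVT2[OF h(1), of k k'] dk h by force
  have "k' z > 0" using d'(2)[rule_format, of z] z h \<open>k' 0 = 0\<close> by auto
  then have "k h > 0" using z h k0 by simp
  moreover have "k h \<le> 0" using le h by auto
  ultimately show False by simp
qed

definition quat1 :: "real^4 \<Rightarrow> real^4" where
  "quat1 p = (\<chi> i. if i = 1 then - p$2 else if i = 2 then p$1 else if i = 3 then - p$4 else p$3)"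
definition quat2 :: "real^4 \<Rightarrow> real^4" where
  "quat2 p = (\<chi> i. if i = 1 then - p$3 else if i = 2 then p$4 else if i = 3 then p$1 else - p$2)"
definition quat3 :: "real^4 \<Rightarrow> real^4" where
  "quat3 p = (\<chi> i. if i = 1 then - p$4 else if i = 2 then - p$3 else if i = 3 then p$2 else p$1)"

lemma quat_props:
  fixes p :: "real^4"
  shows "quat1 p \<bullet> p = 0" "quat2 p \<bullet> p = 0" "quat3 p \<bullet> p = 0"
    "quat1 p \<bullet> quat1 p = p \<bullet> p" "quat2 p \<bullet> quat2 p = p \<bullet> p" "quat3 p \<bullet> quat3 p = p \<bullet> p"
  by (simp_all add: quat1_def quat2_def quat3_def inner_vec_def sum_4 algebra_simps)

definition Qf :: "(4 \<Rightarrow> 4 \<Rightarrow> real) \<Rightarrow> real^4 \<Rightarrow> real" where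
  "Qf H w = (\<Sum>i\<in>UNIV. w$i * (\<Sum>j\<in>UNIV. w$j * H i j))"

lemma Q_sum:
  fixes p :: "real^4"
  shows "Qf H p + Qf H (quat1 p) + Qf H (quat2 p) + Qf H (quat3 p) = (p \<bullet> p) * (\<Sum>i\<in>UNIV. H i i)"
  by (simp add: Qf_def quat1_def quat2_def quat3_def inner_vec_def sum_4 algebra_simps)

lemma norm_orth_line:
  fixes p q :: "real^4"
  assumes "p \<bullet> p = 1" "q \<bullet> q = 1" "q \<bullet> p = 0"
  shows "norm (p + s *\<^sub>R q) powr r = (1 + s^2) powr (r/2)"
proof -
  have "(p + s *\<^sub>R q) \<bullet> (p + s *\<^sub>R q) = 1 + s^2"
    using assms by (simp add: inner_add_left inner_add_right inner_commute power2_eq_square)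
  then have "norm (p + s *\<^sub>R q) = sqrt (1 + s^2)" by (simp add: norm_eq_sqrt_inner)
  also have "\<dots> = (1 + s^2) powr (1/2)" by (simp add: powr_half_sqrt add_pos_nonneg)
  finally show ?thesis by (simp add: powr_powr)
qed



lemma line_bound:
  fixes f :: "real^4 \<Rightarrow> real" and G :: "4 \<Rightarrow> real^4 \<Rightarrow> real" and H :: "4 \<Rightarrow> 4 \<Rightarrow> real^4 \<Rightarrow> real"
  assumes df: "\<forall>y. y \<noteq> 0 \<longrightarrow> (f has_derivative (\<lambda>v. \<Sum>i\<in>UNIV. v$i * G i y)) (at y)"
    and dG: "\<forall>i y. y \<noteq> 0 \<longrightarrow> (G i has_derivative (\<lambda>v. \<Sum>j\<in>UNIV. v$j * H i j y)) (at y)"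
    and d: "\<delta> > 0" and nz: "\<forall>s. \<bar>s\<bar> < \<delta> \<longrightarrow> p + s *\<^sub>R w \<noteq> 0"
    and le: "\<forall>s. \<bar>s\<bar> < \<delta> \<longrightarrow> f (p + s *\<^sub>R w) \<le> \<phi> s" and \<phi>0: "\<phi> 0 = f p"
    and d\<phi>: "\<forall>s. \<bar>s\<bar> < \<delta> \<longrightarrow> DERIV \<phi> s :> \<psi> s" and d\<psi>: "DERIV \<psi> 0 :> c"
  shows "Qf (\<lambda>i j. H i j p) w \<le> c"
proof -
  define k where "k = (\<lambda>s. f (p + s *\<^sub>R w) - \<phi> s)"
  define k' where "k' = (\<lambda>s. (\<Sum>i\<in>UNIV. w$i * G i (p + s *\<^sub>R w)) - \<psi> s)"
  have dk: "\<forall>s. \<bar>s\<bar> < \<delta> \<longrightarrow> DERIV k s :> k' s"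
  proof (intro allI impI)
    fix s assume s: "\<bar>s\<bar> < \<delta>"
    have "DERIV (\<lambda>s. f (p + s *\<^sub>R w)) s :> (\<Sum>i\<in>UNIV. w$i * G i (p + s *\<^sub>R w))"
      using line_deriv[of f "\<lambda>i. G i (p + s *\<^sub>R w)" p s w] df nz s by blast
    then show "DERIV k s :> k' s" unfolding k_def k'_def
      using DERIV_diff d\<phi> s by blast
  qed
  have p0: "p \<noteq> 0" using nz d by (metis abs_zero add.right_neutral scale_zero_left)
  have "DERIV (\<lambda>s. \<Sum>i\<in>UNIV. w$i * G i (p + s *\<^sub>R w)) 0 :> (\<Sum>i\<in>UNIV. w$i * (\<Sum>j\<in>UNIV. w$j * H i j p))"
  proof (rule DERIV_sum)
    fix i :: 4
    have "DERIV (\<lambda>s. G i (p + s *\<^sub>R w)) 0 :> (\<Sum>j\<in>UNIV. w$j * H i j p)"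
      using line_deriv[of "G i" "\<lambda>j. H i j p" p 0 w] dG p0 by simp
    then show "DERIV (\<lambda>s. w$i * G i (p + s *\<^sub>R w)) 0 :> w$i * (\<Sum>j\<in>UNIV. w$j * H i j p)"
      by (rule DERIV_cmult)
  qed
  then have dk': "DERIV k' 0 :> Qf (\<lambda>i j. H i j p) w - c"
    unfolding k'_def Qf_def using DERIV_diff d\<psi> by blast
  have "Qf (\<lambda>i j. H i j p) w - c \<le> 0"
    by (rule key1d[OF d _ _ dk dk']) (use le \<phi>0 in \<open>auto simp: k_def\<close>)
  then show ?thesis by simp
qed



lemma MP:
  fixes f :: "real^4 \<Rightarrow> real" and G :: "4 \<Rightarrow> real^4 \<Rightarrow> real" and H :: "4 \<Rightarrow> 4 \<Rightarrow> real^4 \<Rightarrow> real"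
  assumes r: "-2 < r" "r < 0"
    and df: "\<forall>y. y \<noteq> 0 \<longrightarrow> (f has_derivative (\<lambda>v. \<Sum>i\<in>UNIV. v$i * G i y)) (at y)"
    and dG: "\<forall>i y. y \<noteq> 0 \<longrightarrow> (G i has_derivative (\<lambda>v. \<Sum>j\<in>UNIV. v$j * H i j y)) (at y)"
    and tr: "\<forall>y. y \<noteq> 0 \<longrightarrow> (\<Sum>i\<in>UNIV. H i i y) = 0"
    and hom: "\<forall>t y. t > 0 \<longrightarrow> y \<noteq> 0 \<longrightarrow> f (t *\<^sub>R y) = t powr r * f y"
  shows "\<forall>y. y \<noteq> 0 \<longrightarrow> f y \<le> 0"
proof -
  have cont: "continuous_on (sphere 0 1) f"
  proof (rule continuous_at_imp_continuous_on, rule ballI)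
    fix x :: "real^4" assume "x \<in> sphere 0 1"
    then have "x \<noteq> 0" by auto
    then show "isCont f x" using df has_derivative_continuous by blast
  qed
  obtain p where p: "p \<in> sphere 0 1" "\<forall>x\<in>sphere 0 1. f x \<le> f p"
    using continuous_attains_sup[OF compact_sphere _ cont] by auto
  define M where "M = f p"
  have np: "norm p = 1" using p by simp
  then have pp: "p \<bullet> p = 1" by (simp add: norm_eq_1)
  have p0: "p \<noteq> 0" using np by auto
  have bound: "f z \<le> norm z powr r * M" if z: "z \<noteq> 0" for z
  proof -
    define u where "u = (1 / norm z) *\<^sub>R z"
    have "norm u = 1" using z by (simp add: u_def)
    then have fu: "f u \<le> M" using p by (simp add: M_def)
    have u0: "u \<noteq> 0" using \<open>norm u = 1\<close> by auto
    have "z = norm z *\<^sub>R u" using z by (simp add: u_def)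
    then have "f z = norm z powr r * f u" using hom u0 z by (metis zero_less_norm_iff)
    also have "\<dots> \<le> norm z powr r * M" using fu by (intro mult_left_mono) auto
    finally show ?thesis .
  qed
  have tangent: "Qf (\<lambda>i j. H i j p) q \<le> r * M" if q: "q \<bullet> q = 1" "q \<bullet> p = 0" for q
  proof (rule line_bound[OF df dG, where \<delta>=1 and \<phi>="\<lambda>s. (1 + s^2) powr (r/2) * M"
        and \<psi>="\<lambda>s. (r/2 * (1 + s^2) powr (r/2 - 1) * (2 * s)) * M"])
    show "\<forall>s. \<bar>s\<bar> < 1 \<longrightarrow> p + s *\<^sub>R q \<noteq> 0"
    proof (intro allI impI)
      fix s :: real
      have "(p + s *\<^sub>R q) \<bullet> p = 1" using pp q by (simp add: inner_add_left)
      then show "p + s *\<^sub>R q \<noteq> 0" by auto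
    qed
    show "\<forall>s. \<bar>s\<bar> < 1 \<longrightarrow> f (p + s *\<^sub>R q) \<le> (1 + s^2) powr (r/2) * M"
    proof (intro allI impI)
      fix s :: real
      have "(p + s *\<^sub>R q) \<bullet> p = 1" using pp q by (simp add: inner_add_left)
      then have "p + s *\<^sub>R q \<noteq> 0" by auto
      then show "f (p + s *\<^sub>R q) \<le> (1 + s^2) powr (r/2) * M"
        using bound norm_orth_line[OF pp q(1) q(2)] by metis
    qed
    show "(1 + 0^2) powr (r/2) * M = f p" by (simp add: M_def)
    show "\<forall>s. \<bar>s\<bar> < 1 \<longrightarrow> DERIV (\<lambda>s. (1 + s^2) powr (r/2) * M) s :> (r/2 * (1 + s^2) powr (r/2 - 1) * (2 * s)) * M"
    proof (intro allI impI)
      fix s :: real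
      have pos: "0 < 1 + s^2" by (simp add: add_pos_nonneg)
      show "DERIV (\<lambda>s. (1 + s^2) powr (r/2) * M) s :> (r/2 * (1 + s^2) powr (r/2 - 1) * (2 * s)) * M"
        using pos by (auto intro!: derivative_eq_intros simp: field_simps)
    qed
    show "DERIV (\<lambda>s. (r/2 * (1 + s^2) powr (r/2 - 1) * (2 * s)) * M) 0 :> r * M"
      by (auto intro!: derivative_eq_intros simp: field_simps)
  qed (simp)
  have radial: "Qf (\<lambda>i j. H i j p) p \<le> r * (r - 1) * M"
  proof (rule line_bound[OF df dG, where \<delta>=1 and \<phi>="\<lambda>s. (1 + s) powr r * M"
        and \<psi>="\<lambda>s. (r * (1 + s) powr (r - 1)) * M"])
    show "\<forall>s. \<bar>s\<bar> < 1 \<longrightarrow> p + s *\<^sub>R p \<noteq> 0"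
    proof (intro allI impI)
      fix s :: real assume "\<bar>s\<bar> < 1"
      then have "p + s *\<^sub>R p = (1 + s) *\<^sub>R p" "1 + s \<noteq> 0" by (auto simp: algebra_simps)
      then show "p + s *\<^sub>R p \<noteq> 0" using p0 by simp
    qed
    show "\<forall>s. \<bar>s\<bar> < 1 \<longrightarrow> f (p + s *\<^sub>R p) \<le> (1 + s) powr r * M"
    proof (intro allI impI)
      fix s :: real assume "\<bar>s\<bar> < 1"
      then have "p + s *\<^sub>R p = (1 + s) *\<^sub>R p" "1 + s > 0" by (auto simp: algebra_simps)
      then show "f (p + s *\<^sub>R p) \<le> (1 + s) powr r * M" using hom p0 by (simp add: M_def)
    qed
    show "(1 + 0) powr r * M = f p" by (simp add: M_def)
    show "\<forall>s. \<bar>s\<bar> < 1 \<longrightarrow> DERIV (\<lambda>s. (1 + s) powr r * M) s :> (r * (1 + s) powr (r - 1)) * M"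
    proof (intro allI impI)
      fix s :: real assume "\<bar>s\<bar> < 1"
      then have pos: "0 < 1 + s" by auto
      show "DERIV (\<lambda>s. (1 + s) powr r * M) s :> (r * (1 + s) powr (r - 1)) * M"
        using pos by (auto intro!: derivative_eq_intros simp: field_simps)
    qed
    show "DERIV (\<lambda>s. (r * (1 + s) powr (r - 1)) * M) 0 :> r * (r - 1) * M"
      by (auto intro!: derivative_eq_intros simp: field_simps)
  qed (simp)
  have qs: "quat1 p \<bullet> quat1 p = 1" "quat2 p \<bullet> quat2 p = 1" "quat3 p \<bullet> quat3 p = 1"
    "quat1 p \<bullet> p = 0" "quat2 p \<bullet> p = 0" "quat3 p \<bullet> p = 0"
    using quat_props[of p] pp by auto
  have "Qf (\<lambda>i j. H i j p) p + Qf (\<lambda>i j. H i j p) (quat1 p) + Qf (\<lambda>i j. H i j p) (quat2 p)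
     + Qf (\<lambda>i j. H i j p) (quat3 p) = 0"
    using Q_sum[of "\<lambda>i j. H i j p" p] tr p0 by simp
  then have "0 \<le> r * (r - 1) * M + 3 * (r * M)"
    using radial tangent[OF qs(1,4)] tangent[OF qs(2,5)] tangent[OF qs(3,6)] by linarith
  then have "0 \<le> (r * (r + 2)) * M" by (simp add: algebra_simps)
  moreover have "r * (r + 2) < 0" using r by (simp add: mult_neg_pos)
  ultimately have M: "M \<le> 0" by (metis leI mult_neg_pos not_less)
  show ?thesis
  proof (intro allI impI)
    fix y :: "real^4" assume "y \<noteq> 0"
    then have "f y \<le> norm y powr r * M" by (rule bound)
    also have "\<dots> \<le> 0" using M by (simp add: mult_nonneg_nonpos)
    finally show "f y \<le> 0" .
  qed
qed



abbreviation "U \<equiv> (UNIV - {0::real^4})"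

lemma openU: "open U" by (simp add: open_Diff)

lemma MP0:
  fixes f :: "real^4 \<Rightarrow> real" and G :: "4 \<Rightarrow> real^4 \<Rightarrow> real" and H :: "4 \<Rightarrow> 4 \<Rightarrow> real^4 \<Rightarrow> real"
  assumes r: "-2 < r" "r < 0"
    and df: "\<forall>y. y \<noteq> 0 \<longrightarrow> (f has_derivative (\<lambda>v. \<Sum>i\<in>UNIV. v$i * G i y)) (at y)"
    and dG: "\<forall>i y. y \<noteq> 0 \<longrightarrow> (G i has_derivative (\<lambda>v. \<Sum>j\<in>UNIV. v$j * H i j y)) (at y)"
    and tr: "\<forall>y. y \<noteq> 0 \<longrightarrow> (\<Sum>i\<in>UNIV. H i i y) = 0"
    and hom: "\<forall>t y. t > 0 \<longrightarrow> y \<noteq> 0 \<longrightarrow> f (t *\<^sub>R y) = t powr r * f y"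
    and y: "y \<noteq> 0"
  shows "f y = 0"
proof -
  have "f y \<le> 0" using MP[OF r df dG tr hom] y by blast
  moreover have "- f y \<le> 0"
  proof -
    have df': "\<forall>y. y \<noteq> 0 \<longrightarrow> ((\<lambda>z. - f z) has_derivative (\<lambda>v. \<Sum>i\<in>UNIV. v$i * - G i y)) (at y)"
    proof (intro allI impI)
      fix y :: "real^4" assume "y \<noteq> 0"
      then have "((\<lambda>z. - f z) has_derivative (\<lambda>v. - (\<Sum>i\<in>UNIV. v$i * G i y))) (at y)"
        using df has_derivative_minus by blast
      then show "((\<lambda>z. - f z) has_derivative (\<lambda>v. \<Sum>i\<in>UNIV. v$i * - G i y)) (at y)"
        by (simp add: sum_negf[symmetric])
    qed
    have dG': "\<forall>i y. y \<noteq> 0 \<longrightarrow> ((\<lambda>z. - G i z) has_derivative (\<lambda>v. \<Sum>j\<in>UNIV. v$j * - H i j y)) (at y)"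
    proof (intro allI impI)
      fix i and y :: "real^4" assume "y \<noteq> 0"
      then have "((\<lambda>z. - G i z) has_derivative (\<lambda>v. - (\<Sum>j\<in>UNIV. v$j * H i j y))) (at y)"
        using dG has_derivative_minus by blast
      then show "((\<lambda>z. - G i z) has_derivative (\<lambda>v. \<Sum>j\<in>UNIV. v$j * - H i j y)) (at y)"
        by (simp add: sum_negf[symmetric])
    qed
    have tr': "\<forall>y. y \<noteq> 0 \<longrightarrow> (\<Sum>i\<in>UNIV. - H i i y) = 0" using tr by (simp add: sum_negf)
    have hom': "\<forall>t y. t > 0 \<longrightarrow> y \<noteq> 0 \<longrightarrow> - f (t *\<^sub>R y) = t powr r * - f y" using hom by simp
    show ?thesis using MP[OF r df' dG' tr' hom'] y by blast
  qed
  ultimately show ?thesis by simp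
qed

lemma hp_trans: "higher_partial (pd i f) g \<Longrightarrow> higher_partial f g"
  by (induction rule: higher_partial.induct) (auto intro: higher_partial.intros)

lemma smooth_pd: "smooth_on S f \<Longrightarrow> smooth_on S (pd i f)"
  unfolding smooth_on_def using hp_trans by blast

lemma smooth_diff: "smooth_on S f \<Longrightarrow> y \<in> S \<Longrightarrow> f differentiable at y"
  unfolding smooth_on_def using higher_partial.base by blast

lemma smooth_hasderiv: "smooth_on U f \<Longrightarrow> y \<noteq> 0 \<Longrightarrow> (f has_derivative (\<lambda>v. \<Sum>j\<in>UNIV. v$j * pd j f y)) (at y)"
  using smooth_diff pd_hasderiv by blast

lemma sch: "smooth_on U f \<Longrightarrow> y \<noteq> 0 \<Longrightarrow> pd j (pd i f) y = pd i (pd j f) y"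
  by (rule schwarz[OF openU]) (auto intro: smooth_diff smooth_pd)

lemma pd_add: "f differentiable at y \<Longrightarrow> g differentiable at y \<Longrightarrow>
  pd i (\<lambda>z. f z + g z) y = pd i f y + pd i g y"
proof -
  assume a: "f differentiable at y" "g differentiable at y"
  have "((\<lambda>z. f z + g z) has_derivative (\<lambda>v. \<Sum>j\<in>UNIV. v$j * (pd j f y + pd j g y))) (at y)"
    using has_derivative_add[OF pd_hasderiv[OF a(1)] pd_hasderiv[OF a(2)]]
    by (simp add: distrib_left sum.distrib)
  then show ?thesis by (rule pd_eqI)
qed

lemma pd_diff: "f differentiable at y \<Longrightarrow> g differentiable at y \<Longrightarrow>
  pd i (\<lambda>z. f z - g z) y = pd i f y - pd i g y"
proof -
  assume a: "f differentiable at y" "g differentiable at y"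
  have "((\<lambda>z. f z - g z) has_derivative (\<lambda>v. \<Sum>j\<in>UNIV. v$j * (pd j f y - pd j g y))) (at y)"
    using has_derivative_diff[OF pd_hasderiv[OF a(1)] pd_hasderiv[OF a(2)]]
    by (simp add: right_diff_distrib sum_subtractf)
  then show ?thesis by (rule pd_eqI)
qed

lemma pd_cmult: "f differentiable at y \<Longrightarrow> pd i (\<lambda>z. c * f z) y = c * pd i f y"
proof -
  assume a: "f differentiable at y"
  have "((\<lambda>z. c * f z) has_derivative (\<lambda>v. \<Sum>j\<in>UNIV. v$j * (c * pd j f y))) (at y)"
    using has_derivative_mult_right[OF pd_hasderiv[OF a]]
    by (simp add: sum_distrib_left algebra_simps)
  then show ?thesis by (rule pd_eqI)
qed

lemma pd_sum: "(\<And>k. k \<in> K \<Longrightarrow> f k differentiable at y) \<Longrightarrow>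
  pd i (\<lambda>z. \<Sum>k\<in>K. f k z) y = (\<Sum>k\<in>K. pd i (f k) y)"
proof -
  assume a: "\<And>k. k \<in> K \<Longrightarrow> f k differentiable at y"
  have "((\<lambda>z. \<Sum>k\<in>K. f k z) has_derivative (\<lambda>v. \<Sum>k\<in>K. \<Sum>j\<in>UNIV. v$j * pd j (f k) y)) (at y)"
    using has_derivative_sum[of K "\<lambda>k z. f k z", OF pd_hasderiv[OF a]] by simp
  then have "((\<lambda>z. \<Sum>k\<in>K. f k z) has_derivative (\<lambda>v. \<Sum>j\<in>UNIV. v$j * (\<Sum>k\<in>K. pd j (f k) y))) (at y)"
    by (simp add: sum_distrib_left sum.swap[of _ K])
  then show ?thesis by (rule pd_eqI)
qed

lemma pd_zero:
  fixes f :: "real^'n::finite \<Rightarrow> real"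
  shows "open S \<Longrightarrow> y \<in> S \<Longrightarrow> (\<And>z. z \<in> S \<Longrightarrow> f z = 0) \<Longrightarrow> pd i f y = 0"
proof -
  assume a: "open S" "y \<in> S" "\<And>z. z \<in> S \<Longrightarrow> f z = 0"
  have 1: "pd i f y = pd i (\<lambda>z. 0) y" by (rule pd_cong[OF a(1,2)]) (use a(3) in auto)
  have "((\<lambda>z::real^'n. 0::real) has_derivative (\<lambda>v. \<Sum>j\<in>UNIV. v$j * 0)) (at y)" by simp
  then have "pd i (\<lambda>z. 0) y = 0" by (rule pd_eqI)
  then show ?thesis using 1 by simp
qed

lemma pd_hom:
  fixes f :: "real^4 \<Rightarrow> real"
  assumes df: "\<forall>y. y \<noteq> 0 \<longrightarrow> f differentiable at y"
    and hom: "\<forall>t y. t > 0 \<longrightarrow> y \<noteq> 0 \<longrightarrow> f (t *\<^sub>R y) = t powr r * f y"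
  shows "\<forall>t y. t > 0 \<longrightarrow> y \<noteq> 0 \<longrightarrow> pd i f (t *\<^sub>R y) = t powr (r - 1) * pd i f y"
proof (intro allI impI)
  fix t :: real and y :: "real^4" assume t: "t > 0" and y: "y \<noteq> 0"
  have ty: "t *\<^sub>R y \<noteq> 0" using t y by simp
  have "((\<lambda>z. t *\<^sub>R z) has_derivative (\<lambda>v. t *\<^sub>R v)) (at y)" by (auto intro!: derivative_eq_intros)
  from has_derivative_compose[OF this pd_hasderiv[OF df[rule_format, OF ty]]]
  have "((\<lambda>z. f (t *\<^sub>R z)) has_derivative (\<lambda>v. \<Sum>j\<in>UNIV. v$j * (t * pd j f (t *\<^sub>R y)))) (at y)"
    by (simp add: o_def algebra_simps)
  then have 1: "pd i (\<lambda>z. f (t *\<^sub>R z)) y = t * pd i f (t *\<^sub>R y)" by (rule pd_eqI)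
  have "pd i (\<lambda>z. f (t *\<^sub>R z)) y = pd i (\<lambda>z. t powr r * f z) y"
    by (rule pd_cong[OF openU]) (use y hom t in auto)
  also have "\<dots> = t powr r * pd i f y" using pd_cmult df y by blast
  finally have "t * pd i f (t *\<^sub>R y) = t powr r * pd i f y" using 1 by simp
  moreover have "t powr r = t * t powr (r - 1)" using t by (simp add: powr_diff)
  ultimately show "pd i f (t *\<^sub>R y) = t powr (r - 1) * pd i f y" using t by simp
qed

lemma euler:
  fixes f :: "real^4 \<Rightarrow> real"
  assumes df: "\<forall>y. y \<noteq> 0 \<longrightarrow> f differentiable at y"
    and hom: "\<forall>t y. t > 0 \<longrightarrow> y \<noteq> 0 \<longrightarrow> f (t *\<^sub>R y) = t powr r * f y"
    and y: "y \<noteq> 0"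
  shows "(\<Sum>i\<in>UNIV. y$i * pd i f y) = r * f y"
proof -
  have "DERIV (\<lambda>s. f (0 + s *\<^sub>R y)) 1 :> (\<Sum>i\<in>UNIV. y$i * pd i f (0 + 1 *\<^sub>R y))"
    by (rule line_deriv) (use pd_hasderiv df y in auto)
  then have D1: "DERIV (\<lambda>s. f (s *\<^sub>R y)) 1 :> (\<Sum>i\<in>UNIV. y$i * pd i f y)" by simp
  have D2: "DERIV (\<lambda>s. s powr r * f y) 1 :> r * f y"
    by (auto intro!: derivative_eq_intros)
  have D3: "DERIV (\<lambda>s. f (s *\<^sub>R y)) 1 :> r * f y"
    by (rule has_field_derivative_transform_within_open[OF D2, of "{0<..}"]) (use hom y in auto)
  show ?thesis using DERIV_unique[OF D1 D3] .
qed



lemma lap_alg: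
  fixes P :: "4 \<Rightarrow> 4 \<Rightarrow> 4 \<Rightarrow> real"
  assumes S: "\<forall>a b c. P a b c = P b a c"
    and D: "\<forall>m. P m 1 1 + P m 2 2 + P m 3 3 + P m 4 4 = 0"
    and E1: "\<forall>m. P m 1 2 - P m 2 1 + (P m 3 4 - P m 4 3) = 0"
    and E2: "\<forall>m. P m 1 3 - P m 3 1 + (P m 4 2 - P m 2 4) = 0"
    and E3: "\<forall>m. P m 1 4 - P m 4 1 + (P m 2 3 - P m 3 2) = 0"
  shows "P 1 1 j + P 2 2 j + P 3 3 j + P 4 4 j = 0"
proof -
  note F = S[rule_format, of 1 2 1] S[rule_format, of 1 2 2] S[rule_format, of 1 2 3] S[rule_format, of 1 2 4] S[rule_format, of 1 3 1] S[rule_format, of 1 3 2] S[rule_format, of 1 3 3] S[rule_format, of 1 3 4] S[rule_format, of 1 4 1] S[rule_format, of 1 4 2] S[rule_format, of 1 4 3] S[rule_format, of 1 4 4] S[rule_format, of 2 3 1] S[rule_format, of 2 3 2] S[rule_format, of 2 3 3] S[rule_format, of 2 3 4] S[rule_format, of 2 4 1] S[rule_format, of 2 4 2] S[rule_format, of 2 4 3] S[rule_format, of 2 4 4] S[rule_format, of 3 4 1] S[rule_format, of 3 4 2] S[rule_format, of 3 4 3] S[rule_format, of 3 4 4] D[rule_format, of 1] E1[rule_format, of 1] E2[rule_format, of 1] E3[rule_format, of 1] D[rule_format, of 2] E1[rule_format, of 2] E2[rule_format, of 2] E3[rule_format, of 2] D[rule_format, of 3] E1[rule_format, of 3] E2[rule_format,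 of 3] E3[rule_format, of 3] D[rule_format, of 4] E1[rule_format, of 4] E2[rule_format, of 4] E3[rule_format, of 4]
  have "j = 1 \<or> j = 2 \<or> j = 3 \<or> j = 4" using exhaust_4 by blast
  moreover have "P 1 1 1 + P 2 2 1 + P 3 3 1 + P 4 4 1 = 0" using F by linarith
  moreover have "P 1 1 2 + P 2 2 2 + P 3 3 2 + P 4 4 2 = 0" using F by linarith
  moreover have "P 1 1 3 + P 2 2 3 + P 3 3 3 + P 4 4 3 = 0" using F by linarith
  moreover have "P 1 1 4 + P 2 2 4 + P 3 3 4 + P 4 4 4 = 0" using F by linarith
  ultimately show ?thesis by fast
qed

lemma pd_lin4:
  "a differentiable at y \<Longrightarrow> b differentiable at y \<Longrightarrow> c differentiable at y \<Longrightarrow> d differentiable at y \<Longrightarrow>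
   pd m (\<lambda>z. (a z - b z) + (c z - d z)) y = pd m a y - pd m b y + (pd m c y - pd m d y)"
proof -
  assume h: "a differentiable at y" "b differentiable at y" "c differentiable at y" "d differentiable at y"
  have "(\<lambda>z. a z - b z) differentiable at y" "(\<lambda>z. c z - d z) differentiable at y"
    using h by (auto intro: differentiable_diff)
  then have "pd m (\<lambda>z. (a z - b z) + (c z - d z)) y = pd m (\<lambda>z. a z - b z) y + pd m (\<lambda>z. c z - d z) y"
    by (rule pd_add)
  also have "\<dots> = pd m a y - pd m b y + (pd m c y - pd m d y)"
    using h by (simp add: pd_diff)
  finally show ?thesis .
qed

lemma harm_lemma:
  fixes \<alpha> :: "real^4 \<Rightarrow> real^4"
  assumes sm: "\<forall>i. smooth_on U (\<lambda>y. \<alpha> y $ i)"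
    and dv: "\<forall>y. y \<noteq> 0 \<longrightarrow> (\<Sum>i\<in>UNIV. pd i (\<lambda>z. \<alpha> z $ i) y) = 0"
    and asd: "\<forall>y. y \<noteq> 0 \<longrightarrow>
        dcoef \<alpha> 1 2 y + dcoef \<alpha> 3 4 y = 0 \<and>
        dcoef \<alpha> 1 3 y + dcoef \<alpha> 4 2 y = 0 \<and>
        dcoef \<alpha> 1 4 y + dcoef \<alpha> 2 3 y = 0"
    and y: "y \<noteq> 0"
  shows "(\<Sum>i\<in>UNIV. pd i (pd i (\<lambda>z. \<alpha> z $ j)) y) = 0"
proof -
  define P where "P = (\<lambda>a b c. pd a (pd b (\<lambda>z. \<alpha> z $ c)) y)"
  have dd: "pd b (\<lambda>z. \<alpha> z $ c) differentiable at y" for b c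
    using sm smooth_pd smooth_diff y by blast
  have S: "\<forall>a b c. P a b c = P b a c" unfolding P_def using sch sm y by blast
  have D: "\<forall>m. P m 1 1 + P m 2 2 + P m 3 3 + P m 4 4 = 0"
  proof
    fix m
    have "pd m (\<lambda>z. \<Sum>i\<in>UNIV. pd i (\<lambda>z. \<alpha> z $ i) z) y = 0"
      by (rule pd_zero[OF openU]) (use dv y in auto)
    then have "(\<Sum>i\<in>UNIV. pd m (pd i (\<lambda>z. \<alpha> z $ i)) y) = 0"
      using pd_sum[of UNIV "\<lambda>i. pd i (\<lambda>z. \<alpha> z $ i)" y m] dd by simp
    then show "P m 1 1 + P m 2 2 + P m 3 3 + P m 4 4 = 0" by (simp add: P_def sum_4)
  qed
  have E: "P m a b - P m b a + (P m c d - P m d c) = 0"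
    if h: "\<forall>z. z \<noteq> 0 \<longrightarrow> dcoef \<alpha> a b z + dcoef \<alpha> c d z = 0" for m a b c d
  proof -
    have "pd m (\<lambda>z. dcoef \<alpha> a b z + dcoef \<alpha> c d z) y = 0"
      by (rule pd_zero[OF openU]) (use h y in auto)
    then show ?thesis unfolding dcoef_def P_def using pd_lin4[OF dd dd dd dd] by simp
  qed
  have E1: "\<forall>m. P m 1 2 - P m 2 1 + (P m 3 4 - P m 4 3) = 0" using E asd by blast
  have E2: "\<forall>m. P m 1 3 - P m 3 1 + (P m 4 2 - P m 2 4) = 0" using E asd by blast
  have E3: "\<forall>m. P m 1 4 - P m 4 1 + (P m 2 3 - P m 3 2) = 0" using E asd by blast
  have "P 1 1 j + P 2 2 j + P 3 3 j + P 4 4 j = 0" by (rule lap_alg[OF S D E1 E2 E3])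
  then show ?thesis by (simp add: P_def sum_4)
qed

lemma harm3:
  fixes f :: "real^4 \<Rightarrow> real"
  assumes sm: "smooth_on U f" and hm: "\<forall>y. y \<noteq> 0 \<longrightarrow> (\<Sum>i\<in>UNIV. pd i (pd i f) y) = 0"
    and y: "y \<noteq> 0"
  shows "(\<Sum>i\<in>UNIV. pd i (pd i (pd k f)) y) = 0"
proof -
  have "pd i (pd i (pd k f)) y = pd k (pd i (pd i f)) y" for i
  proof -
    have "pd i (pd i (pd k f)) y = pd i (pd k (pd i f)) y"
      by (rule pd_cong[OF openU]) (use sch[OF sm] y in auto)
    also have "\<dots> = pd k (pd i (pd i f)) y"
      using sch[OF smooth_pd[OF sm] y] by simp
    finally show ?thesis .
  qed
  then have "(\<Sum>i\<in>UNIV. pd i (pd i (pd k f)) y) = (\<Sum>i\<in>UNIV. pd k (pd i (pd i f)) y)" by simp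
  also have "\<dots> = pd k (\<lambda>z. \<Sum>i\<in>UNIV. pd i (pd i f) z) y"
    by (rule pd_sum[symmetric]) (use sm smooth_pd smooth_diff y in blast)
  also have "\<dots> = 0" by (rule pd_zero[OF openU]) (use hm y in auto)
  finally show ?thesis .
qed

lemma case_open:
  fixes f :: "real^4 \<Rightarrow> real"
  assumes r: "-2 < r" "r < 0" and sm: "smooth_on U f"
    and hm: "\<forall>y. y \<noteq> 0 \<longrightarrow> (\<Sum>i\<in>UNIV. pd i (pd i f) y) = 0"
    and hom: "\<forall>t y. t > 0 \<longrightarrow> y \<noteq> 0 \<longrightarrow> f (t *\<^sub>R y) = t powr r * f y"
    and y: "y \<noteq> 0"
  shows "f y = 0"
proof (rule MP0[where G="\<lambda>i. pd i f" and H="\<lambda>i j. pd j (pd i f)", OF r _ _ hm hom y])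
  show "\<forall>y. y \<noteq> 0 \<longrightarrow> (f has_derivative (\<lambda>v. \<Sum>i\<in>UNIV. v$i * pd i f y)) (at y)"
    using smooth_hasderiv[OF sm] by blast
  show "\<forall>i y. y \<noteq> 0 \<longrightarrow> (pd i f has_derivative (\<lambda>v. \<Sum>j\<in>UNIV. v$j * pd j (pd i f) y)) (at y)"
    using smooth_hasderiv[OF smooth_pd[OF sm]] by blast
qed

lemma connU: "connected U"
proof -
  have "path_connected (- {0::real^4})" by (rule path_connected_punctured_universe) simp
  moreover have "- {0::real^4} = U" by auto
  ultimately show ?thesis using path_connected_imp_connected by metis
qed

lemma const_odd:
  fixes f :: "real^4 \<Rightarrow> real"
  assumes df: "\<forall>y. y \<noteq> 0 \<longrightarrow> (f has_derivative (\<lambda>v. 0)) (at y)"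
    and odd: "\<forall>y. y \<noteq> 0 \<longrightarrow> f (- y) = - f y"
    and y: "y \<noteq> 0"
  shows "f y = 0"
proof -
  have "f y = f (- y)"
    by (rule has_derivative_zero_unique_connected[OF openU connU]) (use df y in auto)
  then show ?thesis using odd y by simp
qed

lemma case_zero:
  fixes f :: "real^4 \<Rightarrow> real"
  assumes sm: "smooth_on U f"
    and hm: "\<forall>y. y \<noteq> 0 \<longrightarrow> (\<Sum>i\<in>UNIV. pd i (pd i f) y) = 0"
    and hom: "\<forall>t y. t > 0 \<longrightarrow> y \<noteq> 0 \<longrightarrow> f (t *\<^sub>R y) = t powr 0 * f y"
    and odd: "\<forall>y. y \<noteq> 0 \<longrightarrow> f (- y) = - f y"
    and y: "y \<noteq> 0"
  shows "f y = 0"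
proof -
  have dk: "pd k f z = 0" if z: "z \<noteq> 0" for k z
  proof (rule case_open[of "-1"])
    show "smooth_on U (pd k f)" using smooth_pd[OF sm] .
    show "\<forall>y. y \<noteq> 0 \<longrightarrow> (\<Sum>i\<in>UNIV. pd i (pd i (pd k f)) y) = 0"
      using harm3[OF sm hm] by blast
    show "\<forall>t y. t > 0 \<longrightarrow> y \<noteq> 0 \<longrightarrow> pd k f (t *\<^sub>R y) = t powr -1 * pd k f y"
      using pd_hom[of f 0 k] smooth_diff[OF sm] hom by simp
  qed (use z in auto)
  show ?thesis
  proof (rule const_odd[OF _ odd y], intro allI impI)
    fix z :: "real^4" assume "z \<noteq> 0"
    then show "(f has_derivative (\<lambda>v. 0)) (at z)"
      using smooth_hasderiv[OF sm, of z] dk by simp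
  qed
qed



lemma nthD: "((\<lambda>z::real^4. z$k) has_derivative (\<lambda>v. v$k)) (at z)"
  by (rule bounded_linear_imp_has_derivative) auto

lemma k4: "(k::4) = 1 \<or> k = 2 \<or> k = 3 \<or> k = 4" using exhaust_4 by blast

lemma psi_deriv:
  fixes f g :: "real^4 \<Rightarrow> real" and F G :: "4 \<Rightarrow> real"
  assumes fD: "(f has_derivative (\<lambda>v. \<Sum>j\<in>UNIV. v$j * F j)) (at z)"
    and gD: "(g has_derivative (\<lambda>v. \<Sum>j\<in>UNIV. v$j * G j)) (at z)"
  shows "((\<lambda>z. 2 * z$k * f z + (z \<bullet> z) * g z) has_derivative
     (\<lambda>v. \<Sum>i\<in>UNIV. v$i * (2 * (if i = k then 1 else 0) * f z + 2 * z$k * F i + 2 * z$i * g z + (z \<bullet> z) * G i))) (at z)"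
proof (rule has_derivative_eq_rhs)
  show "((\<lambda>z. 2 * z$k * f z + (z \<bullet> z) * g z) has_derivative
     (\<lambda>v. 2 * v$k * f z + 2 * z$k * (\<Sum>j\<in>UNIV. v$j * F j) + ((z \<bullet> v + v \<bullet> z) * g z + (z \<bullet> z) * (\<Sum>j\<in>UNIV. v$j * G j)))) (at z)"
    by (auto intro!: derivative_eq_intros fD gD nthD simp: algebra_simps)
  show "(\<lambda>v. 2 * v$k * f z + 2 * z$k * (\<Sum>j\<in>UNIV. v$j * F j) + ((z \<bullet> v + v \<bullet> z) * g z + (z \<bullet> z) * (\<Sum>j\<in>UNIV. v$j * G j))) =
    (\<lambda>v. \<Sum>i\<in>UNIV. v$i * (2 * (if i = k then 1 else 0) * f z + 2 * z$k * F i + 2 * z$i * g z + (z \<bullet> z) * G i))"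
  proof (rule ext)
    fix v :: "real^4"
    show "2 * v$k * f z + 2 * z$k * (\<Sum>j\<in>UNIV. v$j * F j) + ((z \<bullet> v + v \<bullet> z) * g z + (z \<bullet> z) * (\<Sum>j\<in>UNIV. v$j * G j)) =
      (\<Sum>i\<in>UNIV. v$i * (2 * (if i = k then 1 else 0) * f z + 2 * z$k * F i + 2 * z$i * g z + (z \<bullet> z) * G i))"
      using k4[of k] by (elim disjE) (simp_all add: sum_4 inner_vec_def algebra_simps)
  qed
qed

lemma G_deriv:
  fixes f f1 g g1 :: "real^4 \<Rightarrow> real" and Fd F1d Gd G1d :: "4 \<Rightarrow> real"
  assumes fD: "(f has_derivative (\<lambda>v. \<Sum>j\<in>UNIV. v$j * Fd j)) (at z)"
    and f1D: "(f1 has_derivative (\<lambda>v. \<Sum>j\<in>UNIV. v$j * F1d j)) (at z)"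
    and gD: "(g has_derivative (\<lambda>v. \<Sum>j\<in>UNIV. v$j * Gd j)) (at z)"
    and g1D: "(g1 has_derivative (\<lambda>v. \<Sum>j\<in>UNIV. v$j * G1d j)) (at z)"
  shows "((\<lambda>z. 2 * (if i = k then 1 else 0) * f z + 2 * z$k * f1 z + 2 * z$i * g z + (z \<bullet> z) * g1 z) has_derivative
     (\<lambda>v. \<Sum>j\<in>UNIV. v$j * (2 * (if i = k then 1 else 0) * Fd j + 2 * (if j = k then 1 else 0) * f1 z
        + 2 * z$k * F1d j + 2 * (if i = j then 1 else 0) * g z + 2 * z$i * Gd j + 2 * z$j * g1 z + (z \<bullet> z) * G1d j))) (at z)"
proof (rule has_derivative_eq_rhs)
  show "((\<lambda>z. 2 * (if i = k then 1 else 0) * f z + 2 * z$k * f1 z + 2 * z$i * g z + (z \<bullet> z) * g1 z) has_derivative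
     (\<lambda>v. 2 * (if i = k then 1 else 0) * (\<Sum>j\<in>UNIV. v$j * Fd j) + (2 * v$k * f1 z + 2 * z$k * (\<Sum>j\<in>UNIV. v$j * F1d j))
       + (2 * v$i * g z + 2 * z$i * (\<Sum>j\<in>UNIV. v$j * Gd j))
       + ((z \<bullet> v + v \<bullet> z) * g1 z + (z \<bullet> z) * (\<Sum>j\<in>UNIV. v$j * G1d j)))) (at z)"
    by (auto intro!: derivative_eq_intros fD gD f1D g1D nthD simp: algebra_simps)
  show "(\<lambda>v. 2 * (if i = k then 1 else 0) * (\<Sum>j\<in>UNIV. v$j * Fd j) + (2 * v$k * f1 z + 2 * z$k * (\<Sum>j\<in>UNIV. v$j * F1d j))
       + (2 * v$i * g z + 2 * z$i * (\<Sum>j\<in>UNIV. v$j * Gd j))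
       + ((z \<bullet> v + v \<bullet> z) * g1 z + (z \<bullet> z) * (\<Sum>j\<in>UNIV. v$j * G1d j))) =
     (\<lambda>v. \<Sum>j\<in>UNIV. v$j * (2 * (if i = k then 1 else 0) * Fd j + 2 * (if j = k then 1 else 0) * f1 z
        + 2 * z$k * F1d j + 2 * (if i = j then 1 else 0) * g z + 2 * z$i * Gd j + 2 * z$j * g1 z + (z \<bullet> z) * G1d j))"
  proof (rule ext)
    fix v :: "real^4"
    show "2 * (if i = k then 1 else 0) * (\<Sum>j\<in>UNIV. v$j * Fd j) + (2 * v$k * f1 z + 2 * z$k * (\<Sum>j\<in>UNIV. v$j * F1d j))
       + (2 * v$i * g z + 2 * z$i * (\<Sum>j\<in>UNIV. v$j * Gd j))
       + ((z \<bullet> v + v \<bullet> z) * g1 z + (z \<bullet> z) * (\<Sum>j\<in>UNIV. v$j * G1d j)) =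
     (\<Sum>j\<in>UNIV. v$j * (2 * (if i = k then 1 else 0) * Fd j + 2 * (if j = k then 1 else 0) * f1 z
        + 2 * z$k * F1d j + 2 * (if i = j then 1 else 0) * g z + 2 * z$i * Gd j + 2 * z$j * g1 z + (z \<bullet> z) * G1d j))"
      using k4[of k] k4[of i] by (elim disjE) (simp_all add: sum_4 inner_vec_def algebra_simps)
  qed
qed

lemma trace_id:
  fixes z :: "real^4" and F Fa :: "4 \<Rightarrow> real" and Fb Gb :: "4 \<Rightarrow> 4 \<Rightarrow> real" and gk :: real
  shows "(\<Sum>i\<in>UNIV. 2 * (if i = k then 1 else 0) * Fa i + 2 * (if i = k then 1 else 0) * Fa i
        + 2 * z$k * Fb i i + 2 * (if i = i then 1 else 0) * gk + 2 * z$i * Ga i + 2 * z$i * Ga i + (z \<bullet> z) * Gb i i)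
   = 4 * Fa k + 8 * gk + 2 * z$k * (\<Sum>i\<in>UNIV. Fb i i) + 4 * (\<Sum>i\<in>UNIV. z$i * Ga i) + (z \<bullet> z) * (\<Sum>i\<in>UNIV. Gb i i)"
  using k4[of k] by (elim disjE) (simp_all add: sum_4 algebra_simps)

lemma case_m2:
  fixes f :: "real^4 \<Rightarrow> real"
  assumes sm: "smooth_on U f"
    and hm: "\<forall>y. y \<noteq> 0 \<longrightarrow> (\<Sum>i\<in>UNIV. pd i (pd i f) y) = 0"
    and hom: "\<forall>t y. t > 0 \<longrightarrow> y \<noteq> 0 \<longrightarrow> f (t *\<^sub>R y) = t powr (-2) * f y"
    and odd: "\<forall>y. y \<noteq> 0 \<longrightarrow> f (- y) = - f y"
    and y: "y \<noteq> 0"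
  shows "f y = 0"
proof -
  have df: "\<forall>y. y \<noteq> 0 \<longrightarrow> f differentiable at y" using smooth_diff[OF sm] by blast
  have psi0: "2 * z$k * f z + (z \<bullet> z) * pd k f z = 0" if z: "z \<noteq> 0" for k z
  proof (rule MP0[where r="-1" and f="\<lambda>z. 2 * z$k * f z + (z \<bullet> z) * pd k f z"
      and G="\<lambda>i z. 2 * (if i = k then 1 else 0) * f z + 2 * z$k * pd i f z + 2 * z$i * pd k f z + (z \<bullet> z) * pd i (pd k f) z"
      and H="\<lambda>i j z. 2 * (if i = k then 1 else 0) * pd j f z + 2 * (if j = k then 1 else 0) * pd i f z
        + 2 * z$k * pd j (pd i f) z + 2 * (if i = j then 1 else 0) * pd k f z + 2 * z$i * pd j (pd k f) z
        + 2 * z$j * pd i (pd k f) z + (z \<bullet> z) * pd j (pd i (pd k f)) z"])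
    show "\<forall>y. y \<noteq> 0 \<longrightarrow> ((\<lambda>z. 2 * z$k * f z + (z \<bullet> z) * pd k f z) has_derivative
      (\<lambda>v. \<Sum>i\<in>UNIV. v$i * (2 * (if i = k then 1 else 0) * f y + 2 * y$k * pd i f y + 2 * y$i * pd k f y + (y \<bullet> y) * pd i (pd k f) y))) (at y)"
    proof (intro allI impI)
      fix y :: "real^4" assume y: "y \<noteq> 0"
      show "((\<lambda>z. 2 * z$k * f z + (z \<bullet> z) * pd k f z) has_derivative
      (\<lambda>v. \<Sum>i\<in>UNIV. v$i * (2 * (if i = k then 1 else 0) * f y + 2 * y$k * pd i f y + 2 * y$i * pd k f y + (y \<bullet> y) * pd i (pd k f) y))) (at y)"
        by (rule psi_deriv[OF smooth_hasderiv[OF sm y] smooth_hasderiv[OF smooth_pd[OF sm] y]])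
    qed
    show "\<forall>i y. y \<noteq> 0 \<longrightarrow> ((\<lambda>z. 2 * (if i = k then 1 else 0) * f z + 2 * z$k * pd i f z + 2 * z$i * pd k f z + (z \<bullet> z) * pd i (pd k f) z) has_derivative
      (\<lambda>v. \<Sum>j\<in>UNIV. v$j * (2 * (if i = k then 1 else 0) * pd j f y + 2 * (if j = k then 1 else 0) * pd i f y
        + 2 * y$k * pd j (pd i f) y + 2 * (if i = j then 1 else 0) * pd k f y + 2 * y$i * pd j (pd k f) y
        + 2 * y$j * pd i (pd k f) y + (y \<bullet> y) * pd j (pd i (pd k f)) y))) (at y)"
    proof (intro allI impI)
      fix i and y :: "real^4" assume y: "y \<noteq> 0"
      show "((\<lambda>z. 2 * (if i = k then 1 else 0) * f z + 2 * z$k * pd i f z + 2 * z$i * pd k f z + (z \<bullet> z) * pd i (pd k f) z) has_derivative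
      (\<lambda>v. \<Sum>j\<in>UNIV. v$j * (2 * (if i = k then 1 else 0) * pd j f y + 2 * (if j = k then 1 else 0) * pd i f y
        + 2 * y$k * pd j (pd i f) y + 2 * (if i = j then 1 else 0) * pd k f y + 2 * y$i * pd j (pd k f) y
        + 2 * y$j * pd i (pd k f) y + (y \<bullet> y) * pd j (pd i (pd k f)) y))) (at y)"
        by (rule G_deriv[OF smooth_hasderiv[OF sm y] smooth_hasderiv[OF smooth_pd[OF sm] y]
              smooth_hasderiv[OF smooth_pd[OF sm] y] smooth_hasderiv[OF smooth_pd[OF smooth_pd[OF sm]] y]])
    qed
    show "\<forall>y. y \<noteq> 0 \<longrightarrow> (\<Sum>i\<in>UNIV. 2 * (if i = k then 1 else 0) * pd i f y + 2 * (if i = k then 1 else 0) * pd i f y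
        + 2 * y$k * pd i (pd i f) y + 2 * (if i = i then 1 else 0) * pd k f y + 2 * y$i * pd i (pd k f) y
        + 2 * y$i * pd i (pd k f) y + (y \<bullet> y) * pd i (pd i (pd k f)) y) = 0"
    proof (intro allI impI)
      fix y :: "real^4" assume y: "y \<noteq> 0"
      have h1: "(\<Sum>i\<in>UNIV. pd i (pd i f) y) = 0" using hm y by blast
      have h2: "(\<Sum>i\<in>UNIV. pd i (pd i (pd k f)) y) = 0" using harm3[OF sm hm y] .
      have hk: "\<forall>t y. t > 0 \<longrightarrow> y \<noteq> 0 \<longrightarrow> pd k f (t *\<^sub>R y) = t powr (-2 - 1) * pd k f y"
        using pd_hom[OF df hom] by blast
      have h3: "(\<Sum>i\<in>UNIV. y$i * pd i (pd k f) y) = (-2 - 1) * pd k f y"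
        by (rule euler[OF _ hk y]) (use smooth_diff[OF smooth_pd[OF sm]] in blast)
      show "(\<Sum>i\<in>UNIV. 2 * (if i = k then 1 else 0) * pd i f y + 2 * (if i = k then 1 else 0) * pd i f y
        + 2 * y$k * pd i (pd i f) y + 2 * (if i = i then 1 else 0) * pd k f y + 2 * y$i * pd i (pd k f) y
        + 2 * y$i * pd i (pd k f) y + (y \<bullet> y) * pd i (pd i (pd k f)) y) = 0"
        unfolding trace_id[where k=k and Fa="\<lambda>i. pd i f y" and z=y and Fb="\<lambda>i j. pd j (pd i f) y"
          and gk="pd k f y" and Ga="\<lambda>i. pd i (pd k f) y" and Gb="\<lambda>i j. pd j (pd i (pd k f)) y"] h1 h2 h3 by simp
    qed
    show "\<forall>t y. t > 0 \<longrightarrow> y \<noteq> 0 \<longrightarrow> 2 * (t *\<^sub>R y)$k * f (t *\<^sub>R y) + ((t *\<^sub>R y) \<bullet> (t *\<^sub>R y)) * pd k f (t *\<^sub>R y)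
       = t powr -1 * (2 * y$k * f y + (y \<bullet> y) * pd k f y)"
    proof (intro allI impI)
      fix t :: real and y :: "real^4" assume t: "t > 0" and y: "y \<noteq> 0"
      have hk: "pd k f (t *\<^sub>R y) = t powr (-2 - 1) * pd k f y"
        using pd_hom[OF df hom] t y by blast
      have a: "t powr (-2) = 1 / t^2" "t powr (-2 - 1) = 1 / t^3" "t powr (-1) = 1 / t"
        using t by (simp_all add: powr_minus_divide)
      show "2 * (t *\<^sub>R y)$k * f (t *\<^sub>R y) + ((t *\<^sub>R y) \<bullet> (t *\<^sub>R y)) * pd k f (t *\<^sub>R y)
       = t powr -1 * (2 * y$k * f y + (y \<bullet> y) * pd k f y)"
      proof -
        have e1: "f (t *\<^sub>R y) = (1/t^2) * f y" using hom t y a(1) by simp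
        have e2: "pd k f (t *\<^sub>R y) = (1/t^3) * pd k f y" using hk a(2) by simp
        have e3: "(t *\<^sub>R y) \<bullet> (t *\<^sub>R y) = t^2 * (y \<bullet> y)" by (simp add: power2_eq_square)
        show ?thesis unfolding e1 e2 e3 a(3) using t
          by (simp add: field_simps power2_eq_square power3_eq_cube)
      qed
    qed
  qed (use z in auto)
  define u where "u = (\<lambda>z::real^4. (z \<bullet> z) * f z)"
  have "u z = 0" if z: "z \<noteq> 0" for z
  proof (rule const_odd[of u])
    show "\<forall>y. y \<noteq> 0 \<longrightarrow> (u has_derivative (\<lambda>v. 0)) (at y)"
    proof (intro allI impI)
      fix y :: "real^4" assume y: "y \<noteq> 0"
      have "(u has_derivative (\<lambda>v. (y \<bullet> v + v \<bullet> y) * f y + (y \<bullet> y) * (\<Sum>j\<in>UNIV. v$j * pd j f y))) (at y)"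
        unfolding u_def by (auto intro!: derivative_eq_intros smooth_hasderiv[OF sm y] simp: algebra_simps)
      moreover have "(\<lambda>v. (y \<bullet> v + v \<bullet> y) * f y + (y \<bullet> y) * (\<Sum>j\<in>UNIV. v$j * pd j f y))
          = (\<lambda>v. \<Sum>j\<in>UNIV. v$j * (2 * y$j * f y + (y \<bullet> y) * pd j f y))"
        by (rule ext) (simp add: sum_4 inner_vec_def algebra_simps)
      moreover have "\<And>j. 2 * y$j * f y + (y \<bullet> y) * pd j f y = 0" using psi0 y by blast
      ultimately show "(u has_derivative (\<lambda>v. 0)) (at y)" by simp
    qed
    show "\<forall>y. y \<noteq> 0 \<longrightarrow> u (- y) = - u y" using odd by (simp add: u_def)
  qed (use z in auto)
  then have "(y \<bullet> y) * f y = 0" using y by (simp add: u_def)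
  then show ?thesis using y by simp
qed



theorem lemma5p8:
  fixes r :: real
  assumes "-2 \<le> r" and "r \<le> 0"
  shows "\<not> critical_rate r"
proof
  assume "critical_rate r"
  then obtain \<alpha> :: "real^4 \<Rightarrow> real^4" where
    sm: "\<forall>i. smooth_on (UNIV - {0}) (\<lambda>y. \<alpha> y $ i)" and
    odd: "\<forall>y. y \<noteq> 0 \<longrightarrow> \<alpha> (- y) = - \<alpha> y" and
    hom: "\<forall>t y. t > 0 \<longrightarrow> y \<noteq> 0 \<longrightarrow> \<alpha> (t *\<^sub>R y) = (t powr r) *\<^sub>R \<alpha> y" and
    dv: "\<forall>y. y \<noteq> 0 \<longrightarrow> (\<Sum>i\<in>UNIV. pd i (\<lambda>z. \<alpha> z $ i) y) = 0" and
    asd: "\<forall>y. y \<noteq> 0 \<longrightarrow>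
        dcoef \<alpha> 1 2 y + dcoef \<alpha> 3 4 y = 0 \<and>
        dcoef \<alpha> 1 3 y + dcoef \<alpha> 4 2 y = 0 \<and>
        dcoef \<alpha> 1 4 y + dcoef \<alpha> 2 3 y = 0" and
    ex: "\<exists>y. y \<noteq> 0 \<and> \<alpha> y \<noteq> 0"
    unfolding critical_rate_def by blast
  have zero: "\<alpha> y $ j = 0" if y: "y \<noteq> 0" for y j
  proof -
    have smf: "smooth_on U (\<lambda>z. \<alpha> z $ j)" using sm by blast
    have hm: "\<forall>y. y \<noteq> 0 \<longrightarrow> (\<Sum>i\<in>UNIV. pd i (pd i (\<lambda>z. \<alpha> z $ j)) y) = 0"
      using harm_lemma[OF sm dv asd] by blast
    have homf: "\<forall>t y. t > 0 \<longrightarrow> y \<noteq> 0 \<longrightarrow> \<alpha> (t *\<^sub>R y) $ j = t powr r * \<alpha> y $ j"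
      using hom by simp
    have oddf: "\<forall>y. y \<noteq> 0 \<longrightarrow> \<alpha> (- y) $ j = - \<alpha> y $ j" using odd by simp
    consider "r = -2" | "r = 0" | "-2 < r \<and> r < 0" using assms by linarith
    then show ?thesis
    proof cases
      case 1
      then show ?thesis using case_m2[OF smf hm _ oddf y] homf by simp
    next
      case 2
      then show ?thesis using case_zero[OF smf hm _ oddf y] homf by simp
    next
      case 3
      then show ?thesis using case_open[of r, OF _ _ smf hm homf y] by simp
    qed
  qed
  from ex obtain y where "y \<noteq> 0" "\<alpha> y \<noteq> 0" by blast
  moreover have "\<alpha> y = 0" using zero[OF \<open>y \<noteq> 0\<close>] by (simp add: vec_eq_iff)
  ultimately show False by simp
qed


end
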